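(* Let $B$ be a minimum-weight basis of the weighted uncertainty matroid $\mathcal{M}=(E,\mathcal{I},A,w)$. A set $Q\subseteq E$ is a certificate that verifies $B$ if and only if $U_e(Q)\le L_f(Q)$ for all $e\in B$ and all $f\in (E\setminus\mathrm{span}_M(B\setminus\{e\}))\setminus\{e\}$.
   Context: A weighted uncertainty matroid $\mathcal{M}=(E,\mathcal{I},A,w)$ consists of a matroid $M=(E,\mathcal{I})$ on a finite set $E$, for each $e\in E$ a non-empty finite union $A_e$ of bounded real intervals (each open or closed), and a weight $w_e\in A_e$. Let $L_e=\inf A_e$, $U_e=\sup A_e$. A minimum-weight basis is a basis of $M$ minimizing the sum of weights $w$. A weight assignment is $w^*:E\to\mathbb{R}$ with $w^*_e\in A_e$ for all $e$, consistent with $Q$ if $w^*_e=w_e$ for $e\in Q$. $Q$ verifies $B$ (is a certificate for $B$) if for every weight assignment $w^*$ consistent with $Q$, $B$ is a minimum-weight basis with respect to $w^*$. For $Q\subseteq E$: $L_e(Q)=w_e$ if $e\in Q$ and $L_e(Q)=L_e$ otherwise; $U_e(Q)=w_e$ if $e\in Q$ and $U_e(Q)=U_e$ otherwise. $\mathrm{span}_M(X)=\{e\in E: r(X\cup\{e\})=r(X)\}$ with $r$ the rank function of $M$. *)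

theory Defs
  imports Complex_Main
begin

definition matroid :: "'a set \<Rightarrow> ('a set \<Rightarrow> bool) \<Rightarrow> bool" where
  "matroid E indep \<longleftrightarrow>
     finite E \<and>
     (\<forall>X. indep X \<longrightarrow> X \<subseteq> E) \<and>
     indep {} \<and>
     (\<forall>X Y. indep X \<and> Y \<subseteq> X \<longrightarrow> indep Y) \<and>
     (\<forall>X Y. indep X \<and> indep Y \<and> card X < card Y \<longrightarrow>
        (\<exists>e\<in>Y - X. indep (insert e X)))"

definition basis :: "'a set \<Rightarrow> ('a set \<Rightarrow> bool) \<Rightarrow> 'a set \<Rightarrow> bool" where
  "basis E indep B \<longleftrightarrow> B \<subseteq> E \<and> indep B \<and>
     (\<forall>X. X \<subseteq> E \<and> indep X \<and> B \<subseteq> X \<longrightarrow> X = B)"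

definition rank :: "('a set \<Rightarrow> bool) \<Rightarrow> 'a set \<Rightarrow> nat" where
  "rank indep X = Max {card Y | Y. Y \<subseteq> X \<and> indep Y}"

definition span :: "'a set \<Rightarrow> ('a set \<Rightarrow> bool) \<Rightarrow> 'a set \<Rightarrow> 'a set" where
  "span E indep X = {e \<in> E. rank indep (insert e X) = rank indep X}"

definition min_weight_basis ::
  "'a set \<Rightarrow> ('a set \<Rightarrow> bool) \<Rightarrow> ('a \<Rightarrow> real) \<Rightarrow> 'a set \<Rightarrow> bool" where
  "min_weight_basis E indep w B \<longleftrightarrow> basis E indep B \<and>
     (\<forall>B'. basis E indep B' \<longrightarrow> (\<Sum>e\<in>B. w e) \<le> (\<Sum>e\<in>B'. w e))"

definition bounded_interval :: "real set \<Rightarrow> bool" where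
  "bounded_interval I \<longleftrightarrow> (\<exists>a b. I = {a..b} \<or> I = {a<..<b} \<or> I = {a<..b} \<or> I = {a..<b})"

definition uncertainty_area :: "real set \<Rightarrow> bool" where
  "uncertainty_area S \<longleftrightarrow> S \<noteq> {} \<and>
     (\<exists>\<F>. finite \<F> \<and> (\<forall>I\<in>\<F>. bounded_interval I) \<and> S = \<Union>\<F>)"

definition weighted_uncertainty_matroid ::
  "'a set \<Rightarrow> ('a set \<Rightarrow> bool) \<Rightarrow> ('a \<Rightarrow> real set) \<Rightarrow> ('a \<Rightarrow> real) \<Rightarrow> bool" where
  "weighted_uncertainty_matroid E indep A w \<longleftrightarrow> matroid E indep \<and>
     (\<forall>e\<in>E. uncertainty_area (A e) \<and> w e \<in> A e)"

definition lowL :: "('a \<Rightarrow> real set) \<Rightarrow> 'a \<Rightarrow> real" where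
  "lowL A e = Inf (A e)"

definition upU :: "('a \<Rightarrow> real set) \<Rightarrow> 'a \<Rightarrow> real" where
  "upU A e = Sup (A e)"

definition lowLQ :: "('a \<Rightarrow> real set) \<Rightarrow> ('a \<Rightarrow> real) \<Rightarrow> 'a set \<Rightarrow> 'a \<Rightarrow> real" where
  "lowLQ A w Q e = (if e \<in> Q then w e else lowL A e)"

definition upUQ :: "('a \<Rightarrow> real set) \<Rightarrow> ('a \<Rightarrow> real) \<Rightarrow> 'a set \<Rightarrow> 'a \<Rightarrow> real" where
  "upUQ A w Q e = (if e \<in> Q then w e else upU A e)"

definition consistent_assignment ::
  "'a set \<Rightarrow> ('a \<Rightarrow> real set) \<Rightarrow> ('a \<Rightarrow> real) \<Rightarrow> 'a set \<Rightarrow> ('a \<Rightarrow> real) \<Rightarrow> bool" where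
  "consistent_assignment E A w Q w' \<longleftrightarrow>
     (\<forall>e\<in>E. w' e \<in> A e) \<and> (\<forall>e\<in>Q. w' e = w e)"

definition verifies ::
  "'a set \<Rightarrow> ('a set \<Rightarrow> bool) \<Rightarrow> ('a \<Rightarrow> real set) \<Rightarrow> ('a \<Rightarrow> real) \<Rightarrow> 'a set \<Rightarrow> 'a set \<Rightarrow> bool" where
  "verifies E indep A w Q B \<longleftrightarrow>
     (\<forall>w'. consistent_assignment E A w Q w' \<longrightarrow> min_weight_basis E indep w' B)"

end

theory Submission
  imports Defs
begin

lemma ua_bdd:
  assumes "uncertainty_area S"
  shows "bdd_above S" "bdd_below S" "S \<noteq> {}"
proof -
  obtain F where F: "finite F" "\<forall>I\<in>F. bounded_interval I" "S = \<Union>F"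
    using assms unfolding uncertainty_area_def by blast
  have bi: "bdd_above I \<and> bdd_below I" if "I \<in> F" for I
    using F(2) that unfolding bounded_interval_def by auto
  have habove: "\<forall>i\<in>F. bdd_above i" using bi by simp
  have "bdd_above (\<Union>((\<lambda>I. I) ` F))" by (rule iffD2[OF bdd_above_UN[OF F(1), of "\<lambda>I. I"] habove])
  then show "bdd_above S" using F(3) by simp
  have hbelow: "\<forall>i\<in>F. bdd_below i" using bi by simp
  have "bdd_below (\<Union>((\<lambda>I. I) ` F))" by (rule iffD2[OF bdd_below_UN[OF F(1), of "\<lambda>I. I"] hbelow])
  then show "bdd_below S" using F(3) by simp
  show "S \<noteq> {}" using assms unfolding uncertainty_area_def by blast
qed

lemma m_finE: "matroid E indep \<Longrightarrow> finite E"
  unfolding matroid_def by (elim conjE)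

lemma m_sub: "matroid E indep \<Longrightarrow> indep X \<Longrightarrow> X \<subseteq> E"
proof -
  assume "matroid E indep" "indep X"
  then have "\<forall>X. indep X \<longrightarrow> X \<subseteq> E" unfolding matroid_def by (elim conjE)
  then show "X \<subseteq> E" using \<open>indep X\<close> by blast
qed

lemma m_fin: "matroid E indep \<Longrightarrow> indep X \<Longrightarrow> finite X"
  using m_sub m_finE finite_subset by metis

lemma m_down: "matroid E indep \<Longrightarrow> indep X \<Longrightarrow> Y \<subseteq> X \<Longrightarrow> indep Y"
proof -
  assume "matroid E indep" "indep X" "Y \<subseteq> X"
  then have "\<forall>X Y. indep X \<and> Y \<subseteq> X \<longrightarrow> indep Y" unfolding matroid_def by (elim conjE)
  then show "indep Y" using \<open>indep X\<close> \<open>Y \<subseteq> X\<close> by blast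
qed

lemma m_aug: "matroid E indep \<Longrightarrow> indep X \<Longrightarrow> indep Y \<Longrightarrow> card X < card Y \<Longrightarrow>
    \<exists>e\<in>Y - X. indep (insert e X)"
proof -
  assume "matroid E indep" "indep X" "indep Y" "card X < card Y"
  then have "\<forall>X Y. indep X \<and> indep Y \<and> card X < card Y \<longrightarrow>
        (\<exists>e\<in>Y - X. indep (insert e X))" unfolding matroid_def by (elim conjE)
  then show ?thesis using \<open>indep X\<close> \<open>indep Y\<close> \<open>card X < card Y\<close> by blast
qed

lemma basis_indep: "basis E indep B \<Longrightarrow> indep B"
  unfolding basis_def by (elim conjE)

lemma basis_sub: "basis E indep B \<Longrightarrow> B \<subseteq> E"
  unfolding basis_def by (elim conjE)

lemma basis_max: "basis E indep B \<Longrightarrow> X \<subseteq> E \<Longrightarrow> indep X \<Longrightarrow> B \<subseteq> X \<Longrightarrow> X = B"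
proof -
  assume "basis E indep B" "X \<subseteq> E" "indep X" "B \<subseteq> X"
  then have "\<forall>X. X \<subseteq> E \<and> indep X \<and> B \<subseteq> X \<longrightarrow> X = B" unfolding basis_def by (elim conjE)
  then show "X = B" using \<open>X \<subseteq> E\<close> \<open>indep X\<close> \<open>B \<subseteq> X\<close> by blast
qed

lemma no_bigger:
  assumes M: "matroid E indep" and b: "basis E indep B" and Y: "indep Y"
  shows "\<not> card B < card Y"
proof
  assume "card B < card Y"
  then obtain e where e: "e \<in> Y - B" "indep (insert e B)"
    using m_aug[OF M basis_indep[OF b] Y] by blast
  have "insert e B \<subseteq> E" using m_sub[OF M e(2)] .
  then have "insert e B = B" using basis_max[OF b _ e(2)] by blast
  then show False using e(1) by blast
qed

lemma bases_card:
  assumes M: "matroid E indep" and b: "basis E indep B" "basis E indep B'"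
  shows "card B = card B'"
  using no_bigger[OF M b(1) basis_indep[OF b(2)]] no_bigger[OF M b(2) basis_indep[OF b(1)]]
  by simp

lemma card_basis:
  assumes M: "matroid E indep" and b: "basis E indep B" and Y: "indep Y" "card Y = card B"
  shows "basis E indep Y"
  unfolding basis_def
proof (intro conjI allI impI)
  show "Y \<subseteq> E" using m_sub[OF M Y(1)] .
  show "indep Y" using Y(1) .
  fix X assume hX: "X \<subseteq> E \<and> indep X \<and> Y \<subseteq> X"
  show "X = Y"
  proof (rule ccontr)
    assume "X \<noteq> Y"
    then have "Y \<subset> X" using hX by blast
    then have "card Y < card X" using m_fin[OF M] hX by (meson psubset_card_mono)
    then have "card B < card X" using Y by simp
    then show False using no_bigger[OF M b] hX by blast
  qed
qed

lemma rank_indep: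
  assumes M: "matroid E indep" and X: "indep X"
  shows "rank indep X = card X"
proof -
  have fX: "finite X" using m_fin[OF M X] .
  let ?S = "{card Y | Y. Y \<subseteq> X \<and> indep Y}"
  have le: "\<forall>s\<in>?S. s \<le> card X" using fX card_mono by blast
  then have "?S \<subseteq> {..card X}" by auto
  then have fS: "finite ?S" using finite_subset by blast
  have "card X \<in> ?S" using X by blast
  then show ?thesis unfolding rank_def using fS le by (meson Max_eqI)
qed

lemma rank_dep:
  assumes M: "matroid E indep" and X: "indep X" and d: "\<not> indep (insert f X)"
  shows "rank indep (insert f X) = card X"
proof -
  have fX: "finite X" using m_fin[OF M X] .
  let ?S = "{card Y | Y. Y \<subseteq> insert f X \<and> indep Y}"
  have le: "\<forall>s\<in>?S. s \<le> card X"
  proof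
    fix s assume "s \<in> ?S"
    then obtain Y where Y: "s = card Y" "Y \<subseteq> insert f X" "indep Y" by blast
    show "s \<le> card X"
    proof (rule ccontr)
      assume "\<not> s \<le> card X"
      then have "card X < card Y" using Y(1) by simp
      then obtain e where e: "e \<in> Y - X" "indep (insert e X)"
        using m_aug[OF M X Y(3)] by blast
      then have "e = f" using Y(2) by blast
      then show False using e(2) d by simp
    qed
  qed
  then have "?S \<subseteq> {..card X}" by auto
  then have fS: "finite ?S" using finite_subset by blast
  have "card X \<in> ?S" using X by blast
  then show ?thesis unfolding rank_def using fS le by (meson Max_eqI)
qed

lemma local_opt:
  fixes w :: "'a \<Rightarrow> real"
  assumes M: "matroid E indep" and b: "basis E indep B"
    and loc: "\<forall>e\<in>B. \<forall>g\<in>E. g \<notin> B \<longrightarrow> indep (insert g (B - {e})) \<longrightarrow> w e \<le> w g"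
  shows "basis E indep B' \<Longrightarrow> (\<Sum>e\<in>B. w e) \<le> (\<Sum>e\<in>B'. w e)"
proof (induction "card (B' - B)" arbitrary: B')
  case 0
  have fB': "finite B'" using m_fin[OF M basis_indep[OF 0(2)]] .
  then have "B' \<subseteq> B" using 0(1) by auto
  then have "B = B'" using basis_max[OF 0(2) basis_sub[OF b] basis_indep[OF b]] by simp
  then show ?case by simp
next
  case (Suc n)
  have b': "basis E indep B'" by fact
  have fB': "finite B'" using m_fin[OF M basis_indep[OF b']] .
  have fB: "finite B" using m_fin[OF M basis_indep[OF b]] .
  have ne: "B' - B \<noteq> {}"
  proof
    assume "B' - B = {}"
    then have "card (B' - B) = 0" by (simp only: card.empty)
    then show False using Suc(2) by simp
  qed
  have fD: "finite (B' - B)" using fB' by simp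
  define m where "m = Max (w ` (B' - B))"
  have "m \<in> w ` (B' - B)" unfolding m_def using fD ne by simp
  then obtain f where f: "f \<in> B' - B" "w f = m" by blast
  have fmax: "\<forall>g\<in>B' - B. w g \<le> w f" using f fD unfolding m_def by simp
  define X where "X = B' - {f}"
  have cB: "card B = card B'" using bases_card[OF M b b'] .
  have cX: "card X < card B" unfolding X_def using cB f fB'
    by (metis DiffD1 card_Diff1_less)
  have iX: "indep X" unfolding X_def using m_down[OF M basis_indep[OF b']] by blast
  obtain e where e: "e \<in> B - X" "indep (insert e X)"
    using m_aug[OF M iX basis_indep[OF b] cX] by blast
  have eB': "e \<notin> B'" using e f unfolding X_def by auto
  have fX: "finite X" unfolding X_def using fB' by simp
  have cB'': "card (insert e X) = card B"
  proof -
    have "e \<notin> X" using e by blast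
    then have "card (insert e X) = Suc (card X)" using fX by simp
    moreover have "card X = card B' - 1" unfolding X_def using f by (simp add: card_Diff_singleton)
    moreover have "card B' > 0" using f fB' card_gt_0_iff by blast
    ultimately show ?thesis using cB by simp
  qed
  have b'': "basis E indep (insert e X)" using card_basis[OF M b e(2) cB''] .
  have "insert e X - B = (B' - B) - {f}" unfolding X_def using e by auto
  then have "n = card (insert e X - B)" using Suc(2) f by simp
  then have IH: "(\<Sum>e\<in>B. w e) \<le> (\<Sum>e\<in>insert e X. w e)" using Suc(1) b'' by blast
  have cBe: "card (B - {e}) < card B'" using cB e fB by (metis DiffD1 card_Diff1_less)
  have iBe: "indep (B - {e})" using m_down[OF M basis_indep[OF b]] by blast
  obtain g where g: "g \<in> B' - (B - {e})" "indep (insert g (B - {e}))"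
    using m_aug[OF M iBe basis_indep[OF b'] cBe] by blast
  have gB: "g \<notin> B" using g eB' by auto
  have gE: "g \<in> E" using g basis_sub[OF b'] by blast
  have "w e \<le> w g" using loc e gE gB g(2) by blast
  also have "w g \<le> w f" using fmax g gB by blast
  finally have ef: "w e \<le> w f" .
  have s1: "(\<Sum>e\<in>insert e X. w e) = w e + (\<Sum>e\<in>X. w e)"
    using fX e by (simp add: sum.insert)
  have s2: "(\<Sum>e\<in>B'. w e) = w f + (\<Sum>e\<in>X. w e)"
    unfolding X_def using sum.remove[OF fB', of f w] f(1) by blast
  show ?case using IH s1 s2 ef by linarith
qed

theorem lemma8:
  fixes E :: "'a set" and indep :: "'a set \<Rightarrow> bool"
    and A :: "'a \<Rightarrow> real set" and w :: "'a \<Rightarrow> real"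
    and B Q :: "'a set"
  assumes "weighted_uncertainty_matroid E indep A w"
    and "min_weight_basis E indep w B"
    and "Q \<subseteq> E"
  shows "verifies E indep A w Q B \<longleftrightarrow>
    (\<forall>e\<in>B. \<forall>f\<in>(E - span E indep (B - {e})) - {e}.
       upUQ A w Q e \<le> lowLQ A w Q f)"
proof -
  have M: "matroid E indep" and AE: "\<forall>e\<in>E. uncertainty_area (A e) \<and> w e \<in> A e"
    using assms(1) unfolding weighted_uncertainty_matroid_def by auto
  have b: "basis E indep B" using assms(2) unfolding min_weight_basis_def by blast
  have BE: "B \<subseteq> E" and iB: "indep B" using basis_sub[OF b] basis_indep[OF b] by auto
  have fB: "finite B" using m_fin[OF M iB] .
  have key: "f \<notin> span E indep (B - {e}) \<longleftrightarrow> f \<notin> B \<and> indep (insert f (B - {e}))"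
    if "e \<in> B" "f \<in> E" "f \<noteq> e" for e f
  proof -
    have iBe: "indep (B - {e})" using m_down[OF M iB] by blast
    have fBe: "finite (B - {e})" using fB by simp
    show ?thesis
    proof
      assume ns: "f \<notin> span E indep (B - {e})"
      have "f \<notin> B"
      proof
        assume "f \<in> B"
        then have "insert f (B - {e}) = B - {e}" using that by auto
        then show False using ns that unfolding span_def by simp
      qed
      moreover have "indep (insert f (B - {e}))"
      proof (rule ccontr)
        assume "\<not> indep (insert f (B - {e}))"
        then have "rank indep (insert f (B - {e})) = rank indep (B - {e})"
          using rank_dep[OF M iBe] rank_indep[OF M iBe] by simp
        then show False using ns that unfolding span_def by simp
      qed
      ultimately show "f \<notin> B \<and> indep (insert f (B - {e}))" by blast
    next
      assume h: "f \<notin> B \<and> indep (insert f (B - {e}))"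
      then have "rank indep (insert f (B - {e})) = Suc (card (B - {e}))"
        using rank_indep[OF M] fBe by simp
      then show "f \<notin> span E indep (B - {e})"
        using rank_indep[OF M iBe] unfolding span_def by simp
    qed
  qed
  show ?thesis
  proof
    assume ver: "verifies E indep A w Q B"
    show "\<forall>e\<in>B. \<forall>f\<in>(E - span E indep (B - {e})) - {e}. upUQ A w Q e \<le> lowLQ A w Q f"
    proof (intro ballI, rule ccontr)
      fix e f assume eB: "e \<in> B" and fs: "f \<in> (E - span E indep (B - {e})) - {e}"
        and lt: "\<not> upUQ A w Q e \<le> lowLQ A w Q f"
      have eE: "e \<in> E" using eB BE by blast
      have fE: "f \<in> E" and fe: "f \<noteq> e" using fs by auto
      have kk: "f \<notin> B" "indep (insert f (B - {e}))" using key[OF eB fE fe] fs by auto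
      have ue: "uncertainty_area (A e)" "w e \<in> A e" using AE eE by auto
      have uf: "uncertainty_area (A f)" "w f \<in> A f" using AE fE by auto
      obtain a where a: "a \<in> A e" "a > lowLQ A w Q f" "e \<in> Q \<longrightarrow> a = w e"
      proof (cases "e \<in> Q")
        case True then show ?thesis using that lt ue unfolding upUQ_def by auto
      next
        case False
        then have "lowLQ A w Q f < Sup (A e)" using lt unfolding upUQ_def upU_def by auto
        then obtain a where "a \<in> A e" "lowLQ A w Q f < a"
          using less_cSup_iff[OF ua_bdd(3)[OF ue(1)] ua_bdd(1)[OF ue(1)]] by blast
        then show ?thesis using that False by blast
      qed
      obtain bb where bb: "bb \<in> A f" "bb < a" "f \<in> Q \<longrightarrow> bb = w f"
      proof (cases "f \<in> Q")
        case True then show ?thesis using that a uf unfolding lowLQ_def by auto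
      next
        case False
        then have "Inf (A f) < a" using a unfolding lowLQ_def lowL_def by auto
        then obtain bb where "bb \<in> A f" "bb < a"
          using cInf_less_iff[OF ua_bdd(3)[OF uf(1)] ua_bdd(2)[OF uf(1)]] by blast
        then show ?thesis using that False by blast
      qed
      define w' where "w' = w(e := a, f := bb)"
      have "consistent_assignment E A w Q w'"
        unfolding consistent_assignment_def w'_def using AE a bb by auto
      then have mw: "min_weight_basis E indep w' B" using ver unfolding verifies_def by blast
      have cc: "card (insert f (B - {e})) = card B"
      proof -
        have "card (insert f (B - {e})) = Suc (card (B - {e}))" using fB kk by simp
        moreover have "card (B - {e}) = card B - 1" using eB by (simp add: card_Diff_singleton)
        moreover have "card B > 0" using eB fB card_gt_0_iff by blast
        ultimately show ?thesis by simp
      qed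
      have b2: "basis E indep (insert f (B - {e}))" using card_basis[OF M b kk(2) cc] .
      have le: "(\<Sum>x\<in>B. w' x) \<le> (\<Sum>x\<in>insert f (B - {e}). w' x)"
        using mw b2 unfolding min_weight_basis_def by blast
      have s1: "(\<Sum>x\<in>B. w' x) = w' e + (\<Sum>x\<in>B - {e}. w' x)" using fB eB by (simp add: sum.remove)
      have s2: "(\<Sum>x\<in>insert f (B - {e}). w' x) = w' f + (\<Sum>x\<in>B - {e}. w' x)"
        using fB kk by simp
      have "w' e = a" "w' f = bb" unfolding w'_def using fe by auto
      then show False using le s1 s2 bb by linarith
    qed
  next
    assume cond: "\<forall>e\<in>B. \<forall>f\<in>(E - span E indep (B - {e})) - {e}. upUQ A w Q e \<le> lowLQ A w Q f"
    show "verifies E indep A w Q B"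
      unfolding verifies_def
    proof (intro allI impI)
      fix w' assume ca: "consistent_assignment E A w Q w'"
      have loc: "\<forall>e\<in>B. \<forall>g\<in>E. g \<notin> B \<longrightarrow> indep (insert g (B - {e})) \<longrightarrow> w' e \<le> w' g"
      proof (intro ballI impI)
        fix e g assume eB: "e \<in> B" and gE: "g \<in> E" and gB: "g \<notin> B"
          and ig: "indep (insert g (B - {e}))"
        have ge: "g \<noteq> e" using eB gB by auto
        have eE: "e \<in> E" using eB BE by blast
        have "g \<in> (E - span E indep (B - {e})) - {e}"
          using key[OF eB gE ge] gB ig gE ge by auto
        then have c: "upUQ A w Q e \<le> lowLQ A w Q g" using cond eB by blast
        have ue: "uncertainty_area (A e)" using AE eE by auto
        have ug: "uncertainty_area (A g)" using AE gE by auto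
        have w1: "w' e \<le> upUQ A w Q e"
        proof (cases "e \<in> Q")
          case True then show ?thesis using ca unfolding consistent_assignment_def upUQ_def by auto
        next
          case False
          have "w' e \<in> A e" using ca eE unfolding consistent_assignment_def by auto
          then show ?thesis using False cSup_upper[OF _ ua_bdd(1)[OF ue]]
            unfolding upUQ_def upU_def by auto
        qed
        have w2: "lowLQ A w Q g \<le> w' g"
        proof (cases "g \<in> Q")
          case True then show ?thesis using ca unfolding consistent_assignment_def lowLQ_def by auto
        next
          case False
          have "w' g \<in> A g" using ca gE unfolding consistent_assignment_def by auto
          then show ?thesis using False cInf_lower[OF _ ua_bdd(2)[OF ug]]
            unfolding lowLQ_def lowL_def by auto
        qed
        show "w' e \<le> w' g" using w1 w2 c by linarith
      qed
      show "min_weight_basis E indep w' B"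
        unfolding min_weight_basis_def using b local_opt[OF M b loc] by blast
    qed
  qed
qed

end
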